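(* Let $f\colon K\to R$ be a homomorphism of (nonunital) rings. Assume that $f$ is either left t-unital or right t-unital. Then the ring $R$ is t-unital.
   Context: Rings are associative, not necessarily unital, and ring homomorphisms need not preserve units. A ring $R$ is t-unital if the multiplication map $R\otimes_R R\to R$ is an isomorphism. A left $K$-module $M$ is t-unital if $K\otimes_K M\to M$, $k\otimes m\mapsto km$, is an isomorphism, and a right $K$-module $N$ is t-unital if $N\otimes_K K\to N$ is an isomorphism. The homomorphism $f$ is left (resp. right) t-unital if $R$, with the left (resp. right) $K$-module structure induced by $f$, is a t-unital left (resp. right) $K$-module. *)

theory Defs
  imports Main "HOL-Library.Poly_Mapping"
begin

text \<open>Non-unital rings are modelled by Isabelle's type class ring
  (semiring plus abelian group, no unit).  Tensor products over a non-unital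
  ring K are built as the quotient of the free abelian group on N x M
  (finitely supported functions to int) by the subgroup generated by
  biadditivity and K-balancedness relations.\<close>

definition zsmul :: "int \<Rightarrow> 'a::ab_group_add \<Rightarrow> 'a" where
  "zsmul i a = (if 0 \<le> i then (\<Sum>_<nat i. a) else - (\<Sum>_<nat (- i). a))"

definition gen :: "'n \<Rightarrow> 'm \<Rightarrow> ('n \<times> 'm \<Rightarrow>\<^sub>0 int)" where
  "gen n m = Poly_Mapping.single (n, m) 1"

inductive_set tensor_rel ::
  "('n::ab_group_add \<Rightarrow> 'k \<Rightarrow> 'n) \<Rightarrow> ('k \<Rightarrow> 'm::ab_group_add \<Rightarrow> 'm)
     \<Rightarrow> ('n \<times> 'm \<Rightarrow>\<^sub>0 int) set"
  for ract lact where
  zero: "0 \<in> tensor_rel ract lact"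
| add_left: "gen (n + n') m - gen n m - gen n' m \<in> tensor_rel ract lact"
| add_right: "gen n (m + m') - gen n m - gen n m' \<in> tensor_rel ract lact"
| balanced: "gen (ract n k) m - gen n (lact k m) \<in> tensor_rel ract lact"
| diff: "x \<in> tensor_rel ract lact \<Longrightarrow> y \<in> tensor_rel ract lact
          \<Longrightarrow> x - y \<in> tensor_rel ract lact"

definition tensor_space ::
  "('n::ab_group_add \<Rightarrow> 'k \<Rightarrow> 'n) \<Rightarrow> ('k \<Rightarrow> 'm::ab_group_add \<Rightarrow> 'm)
     \<Rightarrow> ('n \<times> 'm \<Rightarrow>\<^sub>0 int) set set" where
  "tensor_space ract lact =
     UNIV // {(x, y). x - y \<in> tensor_rel ract lact}"

definition free_ext :: "('n \<times> 'm \<Rightarrow> 'a::ab_group_add) \<Rightarrow> ('n \<times> 'm \<Rightarrow>\<^sub>0 int) \<Rightarrow> 'a" where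
  "free_ext b x = (\<Sum>p\<in>Poly_Mapping.keys x. zsmul (Poly_Mapping.lookup x p) (b p))"

text \<open>The map N \<otimes>_K M \<rightarrow> T induced by the balanced map b (n \<otimes> m \<mapsto> b (n,m))
  is an isomorphism (of abelian groups; it is additive, so bijectivity suffices).\<close>
definition tensor_map_iso ::
  "('n::ab_group_add \<Rightarrow> 'k \<Rightarrow> 'n) \<Rightarrow> ('k \<Rightarrow> 'm::ab_group_add \<Rightarrow> 'm)
     \<Rightarrow> ('n \<times> 'm \<Rightarrow> 'a::ab_group_add) \<Rightarrow> bool" where
  "tensor_map_iso ract lact b =
     bij_betw (\<lambda>c. free_ext b (SOME x. x \<in> c)) (tensor_space ract lact) UNIV"

definition t_unital_left_module :: "('k::ring \<Rightarrow> 'm::ab_group_add \<Rightarrow> 'm) \<Rightarrow> bool" where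
  "t_unital_left_module lact =
     tensor_map_iso (\<lambda>a b. a * b) lact (\<lambda>(k, m). lact k m)"

definition t_unital_right_module :: "('n::ab_group_add \<Rightarrow> 'k::ring \<Rightarrow> 'n) \<Rightarrow> bool" where
  "t_unital_right_module ract =
     tensor_map_iso ract (\<lambda>a b. a * b) (\<lambda>(n, k). ract n k)"

definition t_unital_ring :: "'r::ring itself \<Rightarrow> bool" where
  "t_unital_ring _ =
     tensor_map_iso (\<lambda>a b. a * (b::'r)) (\<lambda>a b. a * b) (\<lambda>(r, s). r * s)"

definition ring_hom_nonunital :: "('k::ring \<Rightarrow> 'r::ring) \<Rightarrow> bool" where
  "ring_hom_nonunital f \<longleftrightarrow> (\<forall>a b. f (a + b) = f a + f b) \<and> (\<forall>a b. f (a * b) = f a * f b)"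

definition left_t_unital_hom :: "('k::ring \<Rightarrow> 'r::ring) \<Rightarrow> bool" where
  "left_t_unital_hom f = t_unital_left_module (\<lambda>k r. f k * r)"

definition right_t_unital_hom :: "('k::ring \<Rightarrow> 'r::ring) \<Rightarrow> bool" where
  "right_t_unital_hom f = t_unital_right_module (\<lambda>r k. r * f k)"

end

theory Submission
  imports Defs
begin

lemma zsmul_0[simp]: "zsmul 0 a = 0" by (simp add: zsmul_def)

lemma zsmul_succ: "zsmul (i + 1) a = zsmul i a + a"
proof (cases "i \<ge> 0")
  case True
  then have "nat (i+1) = Suc (nat i)" by simp
  then show ?thesis using True by (simp add: zsmul_def add.commute)
next
  case False
  show ?thesis
  proof (cases "i = -1")
    case True then show ?thesis by (simp add: zsmul_def)
  next
    case F2: False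
    with False have "nat (- i) = Suc (nat (- (i+1)))" by simp
    then show ?thesis using False F2 by (simp add: zsmul_def)
  qed
qed

lemma zsmul_add: "zsmul (i + j) a = zsmul i a + zsmul j a"
proof (induction j rule: int_induct[where k=0])
  case base then show ?case by simp
next
  case (step1 j)
  have "zsmul (i + (j+1)) a = zsmul (i + j) a + a" using zsmul_succ[of "i+j"] by (simp add: add.assoc)
  then show ?case using step1 zsmul_succ[of j a] by (metis add.assoc)
next
  case (step2 j)
  have "zsmul (i + j) a = zsmul (i + (j - 1)) a + a" using zsmul_succ[of "i+(j - 1)"] by simp
  moreover have "zsmul j a = zsmul (j - 1) a + a" using zsmul_succ[of "j - 1"] by simp
  ultimately show ?case using step2 by (metis add.assoc add_right_cancel)
qed

lemma zsmul_minus: "zsmul (- i) a = - zsmul i a"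
  using zsmul_add[of "-i" i a] by (simp add: eq_neg_iff_add_eq_0)

lemma zsmul_one[simp]: "zsmul 1 a = a" by (simp add: zsmul_def)

lemma free_ext_0[simp]: "free_ext b 0 = 0" by (simp add: free_ext_def)

lemma free_ext_of[simp]: "free_ext b (frag_of p) = b p" by (simp add: free_ext_def)

lemma free_ext_gen[simp]: "free_ext b (gen n m) = b (n, m)" by (simp add: gen_def)

lemma free_ext_add: "free_ext f (a+b) = free_ext f a + free_ext f b"
proof -
  let ?U = "Poly_Mapping.keys a \<union> Poly_Mapping.keys b"
  have fin: "finite ?U" by simp
  have ext: "free_ext f x = (\<Sum>i\<in>?U. zsmul (poly_mapping.lookup x i) (f i))"
    if "Poly_Mapping.keys x \<subseteq> ?U" for x
    unfolding free_ext_def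
    by (rule sum.mono_neutral_left[OF fin that]) (simp add: in_keys_iff)
  have "free_ext f (a+b) = (\<Sum>i\<in>?U. zsmul (poly_mapping.lookup (a+b) i) (f i))"
    by (rule ext) (rule keys_add)
  also have "\<dots> = (\<Sum>i\<in>?U. zsmul (poly_mapping.lookup a i) (f i) + zsmul (poly_mapping.lookup b i) (f i))"
    by (simp add: lookup_add zsmul_add)
  also have "\<dots> = free_ext f a + free_ext f b"
    by (simp add: sum.distrib ext)
  finally show ?thesis .
qed

lemma free_ext_minus: "free_ext f (- a) = - free_ext f a"
  by (simp add: free_ext_def lookup_uminus zsmul_minus sum_negf)

lemma free_ext_diff: "free_ext f (a - b) = free_ext f a - free_ext f b"
  by (metis diff_conv_add_uminus free_ext_add free_ext_minus)

lemma tr_minus: "x \<in> tensor_rel r l \<Longrightarrow> - x \<in> tensor_rel r l"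
  by (metis diff_0 tensor_rel.diff tensor_rel.zero)

lemma tr_add: "x \<in> tensor_rel r l \<Longrightarrow> y \<in> tensor_rel r l \<Longrightarrow> x + y \<in> tensor_rel r l"
  by (metis diff_minus_eq_add tensor_rel.diff tr_minus)

lemma tr_gen0: "gen 0 m \<in> tensor_rel r l"
  using tensor_rel.add_left[of 0 0 m r l] tr_minus by fastforce

lemma tr_gen0r: "gen m 0 \<in> tensor_rel r l"
  using tensor_rel.add_right[of m 0 0 r l] tr_minus by fastforce

lemma tr_subl: "gen (a - b) m - gen a m + gen b m \<in> tensor_rel r l"
proof -
  have "gen (a - b + b) m - gen (a - b) m - gen b m \<in> tensor_rel r l" by (rule tensor_rel.add_left)
  from tr_minus[OF this] show ?thesis by (simp add: algebra_simps)
qed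

lemma tr_subr: "gen m (a - b) - gen m a + gen m b \<in> tensor_rel r l"
proof -
  have "gen m (a - b + b) - gen m (a - b) - gen m b \<in> tensor_rel r l" by (rule tensor_rel.add_right)
  from tr_minus[OF this] show ?thesis by (simp add: algebra_simps)
qed

definition balanced_map where
  "balanced_map ract lact b \<longleftrightarrow> (\<forall>n n' m. b (n + n', m) = b (n, m) + b (n', m)) \<and>
     (\<forall>n m m'. b (n, m + m') = b (n, m) + b (n, m')) \<and> (\<forall>n k m. b (ract n k, m) = b (n, lact k m))"

lemma kill:
  assumes "balanced_map ract lact b" "x \<in> tensor_rel ract lact"
  shows "free_ext b x = 0"
  using assms(2) by induction (use assms(1) in \<open>auto simp: balanced_map_def free_ext_diff\<close>)

lemma iso_iff:
  assumes bal: "balanced_map ract lact b"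
  shows "tensor_map_iso ract lact b \<longleftrightarrow>
     (\<forall>t. \<exists>x. free_ext b x = t) \<and> (\<forall>x. free_ext b x = 0 \<longrightarrow> x \<in> tensor_rel ract lact)"
proof -
  define E where "E = {(x, y). x - y \<in> tensor_rel ract lact}"
  have r: "(x, x) \<in> E" for x by (simp add: E_def tensor_rel.zero)
  have s: "(y, x) \<in> E" if "(x, y) \<in> E" for x y
  proof -
    have "- (x - y) \<in> tensor_rel ract lact" using that tr_minus by (simp only: E_def mem_Collect_eq case_prod_conv)
    then show ?thesis by (simp add: E_def)
  qed
  have t: "(x, z) \<in> E" if "(x, y) \<in> E" "(y, z) \<in> E" for x y z
  proof -
    have "(x - y) + (y - z) \<in> tensor_rel ract lact"
      by (rule tr_add) (use that in \<open>simp_all add: E_def\<close>)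
    then show ?thesis by (simp add: E_def)
  qed
  have eq: "equiv UNIV E"
    by (rule equivI) (auto simp: refl_on_def sym_def trans_def intro: r s t)
  have val: "free_ext b (SOME y. y \<in> E `` {x}) = free_ext b x" for x
  proof -
    have "x \<in> E `` {x}" using r by simp
    then have "(SOME y. y \<in> E `` {x}) \<in> E `` {x}" by (rule someI)
    then have "x - (SOME y. y \<in> E `` {x}) \<in> tensor_rel ract lact" by (simp add: E_def)
    from kill[OF bal this] show ?thesis by (simp add: free_ext_diff)
  qed
  let ?g = "\<lambda>c. free_ext b (SOME x. x \<in> c)"
  have img: "?g ` (UNIV // E) = range (free_ext b)"
  proof
    show "?g ` (UNIV // E) \<subseteq> range (free_ext b)"
    proof
      fix t assume "t \<in> ?g ` (UNIV // E)"
      then obtain c where c: "c \<in> UNIV // E" "t = ?g c" by blast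
      obtain x where "c = E``{x}" using c(1) by (blast elim: quotientE)
      then have "t = free_ext b x" using c(2) by (simp only: val)
      then show "t \<in> range (free_ext b)" by blast
    qed
  next
    show "range (free_ext b) \<subseteq> ?g ` (UNIV // E)"
    proof
      fix t assume "t \<in> range (free_ext b)"
      then obtain x where x: "t = free_ext b x" by blast
      have "E``{x} \<in> UNIV // E" by (rule quotientI) simp
      moreover have "t = ?g (E``{x})" using x by (simp only: val)
      ultimately show "t \<in> ?g ` (UNIV // E)" by blast
    qed
  qed
  have inj: "inj_on ?g (UNIV // E) \<longleftrightarrow> (\<forall>x. free_ext b x = 0 \<longrightarrow> x \<in> tensor_rel ract lact)"
  proof
    assume i: "inj_on ?g (UNIV // E)"
    show "\<forall>x. free_ext b x = 0 \<longrightarrow> x \<in> tensor_rel ract lact"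
    proof (intro allI impI)
      fix x assume "free_ext b x = 0"
      then have "?g (E``{x}) = ?g (E``{0})" by (simp only: val free_ext_0)
      moreover have "E``{x} \<in> UNIV // E" "E``{0} \<in> UNIV // E" by (rule quotientI, simp)+
      ultimately have "E``{x} = E``{0}" by (rule inj_onD[OF i])
      then have "(x, 0) \<in> E" using eq by (simp add: eq_equiv_class_iff)
      then show "x \<in> tensor_rel ract lact" by (simp add: E_def)
    qed
  next
    assume k: "\<forall>x. free_ext b x = 0 \<longrightarrow> x \<in> tensor_rel ract lact"
    show "inj_on ?g (UNIV // E)"
    proof (rule inj_onI)
      fix c d assume c: "c \<in> UNIV // E" and d: "d \<in> UNIV // E" and e: "?g c = ?g d"
      obtain x where x: "c = E``{x}" using c by (blast elim: quotientE)
      obtain y where y: "d = E``{y}" using d by (blast elim: quotientE)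
      have "free_ext b x = free_ext b y" using e unfolding x y by (simp only: val)
      then have "free_ext b (x - y) = 0" by (simp add: free_ext_diff)
      then have "(x, y) \<in> E" using k by (simp add: E_def)
      then show "c = d" using eq x y by (simp add: equiv_class_eq)
    qed
  qed
  have "tensor_map_iso ract lact b \<longleftrightarrow> inj_on ?g (UNIV // E) \<and> ?g ` (UNIV // E) = UNIV"
    unfolding tensor_map_iso_def tensor_space_def E_def[symmetric] bij_betw_def ..
  also have "\<dots> \<longleftrightarrow> (\<forall>x. free_ext b x = 0 \<longrightarrow> x \<in> tensor_rel ract lact) \<and> range (free_ext b) = UNIV"
    using inj img by simp
  also have "\<dots> \<longleftrightarrow> (\<forall>t. \<exists>x. free_ext b x = t) \<and> (\<forall>x. free_ext b x = 0 \<longrightarrow> x \<in> tensor_rel ract lact)"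
    by (auto simp: surj_def) (metis)+
  finally show ?thesis .
qed


lemma left_case:
  fixes f :: "'k::ring \<Rightarrow> 'r::ring"
  assumes hom: "ring_hom_nonunital f" and lt: "left_t_unital_hom f"
  shows "t_unital_ring TYPE('r)"
proof -
  have fadd: "f (a + b) = f a + f b" and fmul: "f (a * b) = f a * f b" for a b
    using hom by (auto simp: ring_hom_nonunital_def)
  define bK where "bK = (\<lambda>(k, r). f k * (r::'r))"
  define bR where "bR = (\<lambda>(r, s). r * (s::'r))"
  define TK where "TK = tensor_rel (\<lambda>a b. a * b) (\<lambda>k (r::'r). f k * r)"
  define TR where "TR = tensor_rel (\<lambda>a b. a * b) (\<lambda>a (b::'r). a * b)"
  define \<Phi> where "\<Phi> = free_ext (\<lambda>(k, r::'r). gen (f k) r)"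
  have balK: "balanced_map (\<lambda>a b. a * b) (\<lambda>k (r::'r). f k * r) bK"
    by (simp add: balanced_map_def bK_def fadd fmul algebra_simps)
  have balR: "balanced_map (\<lambda>a b. a * b) (\<lambda>a (b::'r). a * b) bR"
    by (simp add: balanced_map_def bR_def algebra_simps)
  have hK: "tensor_map_iso (\<lambda>a b. a * b) (\<lambda>k (r::'r). f k * r) bK"
    using lt by (simp add: left_t_unital_hom_def t_unital_left_module_def bK_def)
  from iso_iff[OF balK] hK have surjK: "\<And>t. \<exists>x. free_ext bK x = t"
    and kerK: "\<And>x. free_ext bK x = 0 \<Longrightarrow> x \<in> TK" by (auto simp: TK_def)
  have comp: "free_ext bR (\<Phi> y) = free_ext bK y" for y
    using subset_UNIV
    by (induction y rule: frag_induction) (auto simp: \<Phi>_def bR_def bK_def free_ext_diff)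
  have B: "y \<in> TK \<Longrightarrow> \<Phi> y \<in> TR" for y
    unfolding TK_def
  proof (induction rule: tensor_rel.induct)
    case zero then show ?case by (simp add: \<Phi>_def TR_def tensor_rel.zero)
  next
    case (add_left n n' m) then show ?case
      by (simp add: \<Phi>_def TR_def free_ext_diff fadd tensor_rel.add_left)
  next
    case (add_right n m m') then show ?case
      by (simp add: \<Phi>_def TR_def free_ext_diff tensor_rel.add_right)
  next
    case (balanced n k m) then show ?case
      using tensor_rel.balanced[where ract="\<lambda>a b. a * b" and n="f n" and k="f k" and lact="\<lambda>a (b::'r). a * b" and m=m]
      by (simp add: \<Phi>_def TR_def free_ext_diff fmul)
  next
    case (diff x y) then show ?case
      by (simp add: \<Phi>_def TR_def free_ext_diff tensor_rel.diff)
  qed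
  have C: "gen (free_ext bK y0) s - \<Phi> (free_ext (\<lambda>(k, r'). gen k (r' * s)) y0) \<in> TR" for y0 s
    using subset_UNIV
  proof (induction y0 rule: frag_induction)
    case zero then show ?case by (simp add: TR_def \<Phi>_def tr_gen0)
  next
    case (one x)
    obtain k r' where x: "x = (k, r')" by force
    show ?case
      using tensor_rel.balanced[where ract="\<lambda>a b. a * b" and n="f k" and k=r' and lact="\<lambda>a (b::'r). a * b" and m=s]
      by (simp add: x \<Phi>_def TR_def bK_def mult.assoc)
  next
    case (diff a b)
    let ?a = "free_ext bK a" and ?b = "free_ext bK b"
    let ?P = "\<lambda>y. \<Phi> (free_ext (\<lambda>(k, r'). gen k (r' * s)) y)"
    have e: "gen (free_ext bK (a - b)) s - ?P (a - b) =
      (gen (?a - ?b) s - gen ?a s + gen ?b s) + ((gen ?a s - ?P a) - (gen ?b s - ?P b))"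
      by (simp add: free_ext_diff \<Phi>_def algebra_simps)
    show ?case unfolding e TR_def
      by (rule tr_add[OF tr_subl tensor_rel.diff]) (use diff in \<open>auto simp: TR_def\<close>)
  qed
  have A: "\<exists>y. x - \<Phi> y \<in> TR" for x
    using subset_UNIV
  proof (induction x rule: frag_induction)
    case zero then show ?case by (rule exI[of _ 0]) (simp add: \<Phi>_def TR_def tensor_rel.zero)
  next
    case (one x)
    obtain r s where x: "x = (r, s)" by force
    obtain y0 where "free_ext bK y0 = r" using surjK by blast
    then show ?case using C[of y0 s] by (auto simp: x gen_def)
  next
    case (diff a b)
    then obtain ya yb where "a - \<Phi> ya \<in> TR" "b - \<Phi> yb \<in> TR" by blast
    then have "(a - \<Phi> ya) - (b - \<Phi> yb) \<in> TR" by (simp add: TR_def tensor_rel.diff)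
    then show ?case
      by (intro exI[of _ "ya - yb"]) (simp add: \<Phi>_def free_ext_diff algebra_simps)
  qed
  have surjR: "\<exists>x. free_ext bR x = t" for t
    using surjK[of t] comp by metis
  have kerR: "x \<in> TR" if "free_ext bR x = 0" for x
  proof -
    obtain y where y: "x - \<Phi> y \<in> TR" using A by blast
    have "free_ext bR (x - \<Phi> y) = 0" using kill[OF balR] y by (simp add: TR_def)
    then have "free_ext bK y = 0" using that comp by (simp add: free_ext_diff)
    then have "\<Phi> y \<in> TR" using B kerK by blast
    then show ?thesis using y unfolding TR_def by (metis tr_add diff_add_cancel)
  qed
  show ?thesis unfolding t_unital_ring_def
    using iso_iff[OF balR] surjR kerR by (simp add: bR_def TR_def)
qed


lemma right_case:
  fixes f :: "'k::ring \<Rightarrow> 'r::ring"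
  assumes hom: "ring_hom_nonunital f" and rt: "right_t_unital_hom f"
  shows "t_unital_ring TYPE('r)"
proof -
  have fadd: "f (a + b) = f a + f b" and fmul: "f (a * b) = f a * f b" for a b
    using hom by (auto simp: ring_hom_nonunital_def)
  define bK where "bK = (\<lambda>(r::'r, k). r * f k)"
  define bR where "bR = (\<lambda>(r, s). r * (s::'r))"
  define TK where "TK = tensor_rel (\<lambda>(r::'r) k. r * f k) (\<lambda>a b. a * b)"
  define TR where "TR = tensor_rel (\<lambda>a b. a * b) (\<lambda>a (b::'r). a * b)"
  define \<Phi> where "\<Phi> = free_ext (\<lambda>(r::'r, k). gen r (f k))"
  have balK: "balanced_map (\<lambda>(r::'r) k. r * f k) (\<lambda>a b. a * b) bK"
    by (simp add: balanced_map_def bK_def fadd fmul algebra_simps)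
  have balR: "balanced_map (\<lambda>a b. a * b) (\<lambda>a (b::'r). a * b) bR"
    by (simp add: balanced_map_def bR_def algebra_simps)
  have hK: "tensor_map_iso (\<lambda>(r::'r) k. r * f k) (\<lambda>a b. a * b) bK"
    using rt by (simp add: right_t_unital_hom_def t_unital_right_module_def bK_def)
  from iso_iff[OF balK] hK have surjK: "\<And>t. \<exists>x. free_ext bK x = t"
    and kerK: "\<And>x. free_ext bK x = 0 \<Longrightarrow> x \<in> TK" by (auto simp: TK_def)
  have comp: "free_ext bR (\<Phi> y) = free_ext bK y" for y
    using subset_UNIV
    by (induction y rule: frag_induction) (auto simp: \<Phi>_def bR_def bK_def free_ext_diff)
  have B: "y \<in> TK \<Longrightarrow> \<Phi> y \<in> TR" for y
    unfolding TK_def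
  proof (induction rule: tensor_rel.induct)
    case zero then show ?case by (simp add: \<Phi>_def TR_def tensor_rel.zero)
  next
    case (add_left n n' m) then show ?case
      by (simp add: \<Phi>_def TR_def free_ext_diff tensor_rel.add_left)
  next
    case (add_right n m m') then show ?case
      by (simp add: \<Phi>_def TR_def free_ext_diff fadd tensor_rel.add_right)
  next
    case (balanced n k m) then show ?case
      using tensor_rel.balanced[where ract="\<lambda>a b. a * b" and n=n and k="f k" and lact="\<lambda>a (b::'r). a * b" and m="f m"]
      by (simp add: \<Phi>_def TR_def free_ext_diff fmul)
  next
    case (diff x y) then show ?case
      by (simp add: \<Phi>_def TR_def free_ext_diff tensor_rel.diff)
  qed
  have C: "gen s (free_ext bK y0) - \<Phi> (free_ext (\<lambda>(r', k). gen (s * r') k) y0) \<in> TR" for y0 s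
    using subset_UNIV
  proof (induction y0 rule: frag_induction)
    case zero then show ?case
      by (simp add: TR_def \<Phi>_def tr_gen0r)
  next
    case (one x)
    obtain r' k where x: "x = (r', k)" by force
    show ?case
      using tr_minus[OF tensor_rel.balanced[where ract="\<lambda>a b. a * b" and n=s and k=r' and lact="\<lambda>a (b::'r). a * b" and m="f k"]]
      by (simp add: x \<Phi>_def TR_def bK_def mult.assoc)
  next
    case (diff a b)
    let ?a = "free_ext bK a" and ?b = "free_ext bK b"
    let ?P = "\<lambda>y. \<Phi> (free_ext (\<lambda>(r', k). gen (s * r') k) y)"
    have e: "gen s (free_ext bK (a - b)) - ?P (a - b) =
      (gen s (?a - ?b) - gen s ?a + gen s ?b) + ((gen s ?a - ?P a) - (gen s ?b - ?P b))"
      by (simp add: free_ext_diff \<Phi>_def algebra_simps)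
    show ?case unfolding e TR_def
      by (rule tr_add[OF tr_subr tensor_rel.diff]) (use diff in \<open>auto simp: TR_def\<close>)
  qed
  have A: "\<exists>y. x - \<Phi> y \<in> TR" for x
    using subset_UNIV
  proof (induction x rule: frag_induction)
    case zero then show ?case by (rule exI[of _ 0]) (simp add: \<Phi>_def TR_def tensor_rel.zero)
  next
    case (one x)
    obtain r s where x: "x = (r, s)" by force
    obtain y0 where "free_ext bK y0 = s" using surjK by blast
    then show ?case using C[of r y0] by (auto simp: x gen_def)
  next
    case (diff a b)
    then obtain ya yb where "a - \<Phi> ya \<in> TR" "b - \<Phi> yb \<in> TR" by blast
    then have "(a - \<Phi> ya) - (b - \<Phi> yb) \<in> TR" by (simp add: TR_def tensor_rel.diff)
    then show ?case
      by (intro exI[of _ "ya - yb"]) (simp add: \<Phi>_def free_ext_diff algebra_simps)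
  qed
  have surjR: "\<exists>x. free_ext bR x = t" for t
    using surjK[of t] comp by metis
  have kerR: "x \<in> TR" if "free_ext bR x = 0" for x
  proof -
    obtain y where y: "x - \<Phi> y \<in> TR" using A by blast
    have "free_ext bR (x - \<Phi> y) = 0" using kill[OF balR] y by (simp add: TR_def)
    then have "free_ext bK y = 0" using that comp by (simp add: free_ext_diff)
    then have "\<Phi> y \<in> TR" using B kerK by blast
    then show ?thesis using y unfolding TR_def by (metis tr_add diff_add_cancel)
  qed
  show ?thesis unfolding t_unital_ring_def
    using iso_iff[OF balR] surjR kerR by (simp add: bR_def TR_def)
qed

theorem proposition9p5:
  fixes f :: "'k::ring \<Rightarrow> 'r::ring"
  assumes "ring_hom_nonunital f"
    and "left_t_unital_hom f \<or> right_t_unital_hom f"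
  shows "t_unital_ring TYPE('r)"
  using assms left_case right_case by blast

end
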